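(* Fix $k\in\mathbb{N}$ and let $\alpha=\alpha(n)\in(0,\infty)$. If $\alpha/\sqrt{n}\to\infty$ as $n\to\infty$, then $d_{TV}(M_{n,k}^{\alpha},M_{n,k}^{\infty})\to 0$ as $n\to\infty$.
   Context: A $k$-out map on $[n]$ is a map $M:[n]\to[n]^k$, viewed as a digraph on $[n]$ in which each vertex has $k$ out-arcs labeled $1,\dots,k$; $\mathcal{M}_{n,k}$ denotes the set of all such maps. The in-degree $d_j$ of vertex $j$ is the total number of coordinates, over all vertices $i$ and all $k$ labels, of $M(i)$ equal to $j$ (so $d_1+\dots+d_n=kn$). For $\alpha\in(0,\infty)$, the random $k$-out map $M_{n,k}^{\alpha}$ is generated by inserting $kn$ out-arcs, $k$ per vertex: every vertex starts with weight $\alpha$; at each step a vertex whose out-degree is below $k$ picks its next image $j$ with probability proportional to the current weight of $j$, and the weight of $j$ then increases by $1$. Its law is $P(M_{n,k}^{\alpha}=M)=\prod_{j=1}^n \alpha^{\overline{d_j}}/(\alpha n)^{\overline{kn}}$, where $(d_1,\dots,d_n)$ is the in-degree sequence of $M$ and $x^{\overline{y}}=x(x+1)\cdots(x+y-1)$. $M_{n,k}^{\infty}$ denotes the uniformly random element of $\mathcal{M}_{n,k}$ (probability $n^{-kn}$ each). $d_{TV}(M_{n,k}^{\alpha},M_{n,k}^{\infty})=\sup_{\mathcal{A}\subseteq\mathcal{M}_{n,k}}|P(M_{n,k}^{\alpha}\in\mathcal{A})-P(M_{n,k}^{\infty}\in\mathcal{A})|=\frac12\sum_{M\in\mathcal{M}_{n,k}}|P(M_{n,k}^{\alpha}=M)-P(M_{n,k}^{\infty}=M)|$.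 *)

theory Defs
  imports "HOL-Analysis.Analysis"
begin

text \<open>Vertices of [n] are represented as 0,...,n-1 and arc labels 1..k as 0,...,k-1.
  A k-out map M : [n] -> [n]^k is a function M with M i l = l-th image of vertex i
  (extensional: M i l = undefined outside the domain).\<close>

definition kout_maps :: "nat \<Rightarrow> nat \<Rightarrow> (nat \<Rightarrow> nat \<Rightarrow> nat) set" where
  "kout_maps n k = {..<n} \<rightarrow>\<^sub>E ({..<k} \<rightarrow>\<^sub>E {..<n})"

definition indeg :: "nat \<Rightarrow> nat \<Rightarrow> (nat \<Rightarrow> nat \<Rightarrow> nat) \<Rightarrow> nat \<Rightarrow> nat" where
  "indeg n k M j = card {(i, l). i < n \<and> l < k \<and> M i l = j}"

definition prob_alpha :: "nat \<Rightarrow> nat \<Rightarrow> real \<Rightarrow> (nat \<Rightarrow> nat \<Rightarrow> nat) \<Rightarrow> real" where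
  "prob_alpha n k \<alpha> M =
     (\<Prod>j<n. pochhammer \<alpha> (indeg n k M j)) / pochhammer (\<alpha> * real n) (k * n)"

definition prob_unif :: "nat \<Rightarrow> nat \<Rightarrow> (nat \<Rightarrow> nat \<Rightarrow> nat) \<Rightarrow> real" where
  "prob_unif n k M = 1 / real n ^ (k * n)"

definition dTV :: "nat \<Rightarrow> nat \<Rightarrow> real \<Rightarrow> real" where
  "dTV n k \<alpha> = (1/2) * (\<Sum>M\<in>kout_maps n k. \<bar>prob_alpha n k \<alpha> M - prob_unif n k M\<bar>)"

end

theory Submission imports Defs begin

abbreviation S :: "nat \<Rightarrow> nat \<Rightarrow> (nat \<Rightarrow> nat) set" where
  "S n N \<equiv> {..<N} \<rightarrow>\<^sub>E {..<n}"

definition cnt :: "(nat \<Rightarrow> nat) \<Rightarrow> nat \<Rightarrow> nat \<Rightarrow> nat" where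
  "cnt f t x = card {s. s < t \<and> f s = x}"

definition cc :: "(nat \<Rightarrow> nat) \<Rightarrow> nat \<Rightarrow> nat" where
  "cc f t = cnt f t (f t)"

lemma sum_S_Suc:
  "(\<Sum>g\<in>S n (Suc N). G g) = (\<Sum>f\<in>S n N. \<Sum>x<n. G (f(N:=x)))"
proof -
  have e: "S n (Suc N) = (\<lambda>(y, g). g(N := y)) ` ({..<n} \<times> S n N)"
    using PiE_insert_eq[of N "{..<N}" "\<lambda>_. {..<n}"] by (simp add: lessThan_Suc)
  have i: "inj_on (\<lambda>(y, g). g(N := y)) ({..<n} \<times> S n N)"
    using inj_combinator[of N "{..<N}" "\<lambda>_. {..<n}"] by simp
  have "(\<Sum>g\<in>S n (Suc N). G g) = (\<Sum>p\<in>{..<n} \<times> S n N. G (case p of (y, g) \<Rightarrow> g(N := y)))"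
    unfolding e by (subst sum.reindex[OF i]) (simp add: o_def)
  also have "\<dots> = (\<Sum>y<n. \<Sum>f\<in>S n N. G (f(N:=y)))"
    by (simp add: sum.cartesian_product split_def)
  also have "\<dots> = (\<Sum>f\<in>S n N. \<Sum>x<n. G (f(N:=x)))"
    by (rule sum.swap)
  finally show ?thesis .
qed

lemma cnt_Suc: "cnt f (Suc t) x = cnt f t x + (if f t = x then 1 else 0)"
proof -
  have "{s. s < Suc t \<and> f s = x} = {s. s < t \<and> f s = x} \<union> (if f t = x then {t} else {})"
    by (auto simp: less_Suc_eq)
  then show ?thesis unfolding cnt_def by (auto simp: card_insert_if)
qed

lemma cnt_upd: "t \<le> N \<Longrightarrow> cnt (f(N:=x)) t y = cnt f t y"
  unfolding cnt_def by (intro arg_cong[where f=card]) auto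

lemma cc_upd: "t < N \<Longrightarrow> cc (f(N:=x)) t = cc f t"
  unfolding cc_def using cnt_upd[of t N f x] by simp

lemma cc_upd_N: "cc (f(N:=x)) N = cnt f N x"
  unfolding cc_def using cnt_upd[of N N f x] by simp

lemma sum_cnt: "\<forall>s<N. f s < n \<Longrightarrow> (\<Sum>x<n. cnt f N x) = N"
proof (induction N)
  case 0 then show ?case by (simp add: cnt_def)
next
  case (Suc N)
  have "(\<Sum>x<n. cnt f (Suc N) x) = (\<Sum>x<n. cnt f N x) + (\<Sum>x<n. (if f N = x then 1 else 0))"
    by (simp add: cnt_Suc sum.distrib)
  also have "(\<Sum>x<n. (if f N = x then 1 else 0::nat)) = 1"
    using Suc.prems by (simp add: sum.delta)
  finally show ?case using Suc by simp
qed

lemma sum_cnt_sq: "\<forall>s<N. f s < n \<Longrightarrow>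
   (\<Sum>x<n. (real (cnt f N x))^2) = real N + 2 * (\<Sum>t<N. real (cc f t))"
proof (induction N)
  case 0 then show ?case by (simp add: cnt_def)
next
  case (Suc N)
  have "(\<Sum>x<n. (real (cnt f (Suc N) x))^2) =
     (\<Sum>x<n. (real (cnt f N x))^2 + (2 * real (cnt f N x) + 1) * (if f N = x then 1 else 0))"
    by (intro sum.cong) (auto simp: cnt_Suc power2_eq_square algebra_simps)
  also have "\<dots> = (\<Sum>x<n. (real (cnt f N x))^2) + (2 * real (cc f N) + 1)"
  proof -
    have "(\<Sum>x<n. (2 * real (cnt f N x) + 1) * (if f N = x then 1 else 0)) = 2 * real (cc f N) + 1"
      using Suc.prems by (simp add: if_distrib[where f="\<lambda>z. _ * z"] sum.delta cc_def cong: if_cong)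
    then show ?thesis by (simp add: sum.distrib)
  qed
  finally show ?case using Suc by simp
qed

lemma sum_upd_Suc: "(\<Sum>t<Suc N. h (cc (f(N:=x)) t)) = (\<Sum>t<N. h (cc f t)) + h (cnt f N x)"
  by (simp add: cc_upd cc_upd_N)

lemma prod_upd_Suc: "(\<Prod>t<Suc N. h (cc (f(N:=x)) t)) = (\<Prod>t<N. h (cc f t)) * h (cnt f N x)"
  by (simp add: cc_upd cc_upd_N)

lemma S_mem: "f \<in> S n N \<Longrightarrow> \<forall>s<N. f s < n"
  by (auto simp: PiE_iff)

lemma card_S: "card (S n N) = n ^ N"
  by (simp add: card_funcsetE)

lemma norm_sum:
  "(\<Sum>f\<in>S n N. \<Prod>t<N. (a + real (cc f t))) = (\<Prod>t<N. (a * real n + real t))"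
proof (induction N)
  case 0 then show ?case by simp
next
  case (Suc N)
  have "(\<Sum>f\<in>S n (Suc N). \<Prod>t<Suc N. (a + real (cc f t)))
     = (\<Sum>f\<in>S n N. \<Sum>x<n. (\<Prod>t<N. (a + real (cc f t))) * (a + real (cnt f N x)))"
    unfolding sum_S_Suc by (simp add: cc_upd cc_upd_N)
  also have "\<dots> = (\<Sum>f\<in>S n N. (\<Prod>t<N. (a + real (cc f t))) * (a * real n + real N))"
  proof (intro sum.cong refl)
    fix f assume f: "f \<in> S n N"
    have "(\<Sum>x<n. (a + real (cnt f N x))) = a * real n + real N"
      using sum_cnt[OF S_mem[OF f]] by (simp add: sum.distrib mult.commute flip: of_nat_sum)
    then show "(\<Sum>x<n. (\<Prod>t<N. (a + real (cc f t))) * (a + real (cnt f N x))) =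
        (\<Prod>t<N. (a + real (cc f t))) * (a * real n + real N)"
      by (simp add: sum_distrib_left[symmetric])
  qed
  also have "\<dots> = (\<Prod>t<Suc N. (a * real n + real t))"
    using Suc by (simp add: sum_distrib_right[symmetric])
  finally show ?case .
qed

lemma sum_X:
  "2 * real n * (\<Sum>f\<in>S n N. \<Sum>t<N. real (cc f t)) = real n ^ N * real N * (real N - 1)"
proof (induction N)
  case 0 then show ?case by simp
next
  case (Suc N)
  have "(\<Sum>f\<in>S n (Suc N). \<Sum>t<Suc N. real (cc f t))
     = (\<Sum>f\<in>S n N. \<Sum>x<n. (\<Sum>t<N. real (cc f t)) + real (cnt f N x))"
    by (simp only: sum_S_Suc sum_upd_Suc)
  also have "\<dots> = (\<Sum>f\<in>S n N. real n * (\<Sum>t<N. real (cc f t)) + real N)"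
  proof (intro sum.cong refl)
    fix f assume f: "f \<in> S n N"
    show "(\<Sum>x<n. (\<Sum>t<N. real (cc f t)) + real (cnt f N x)) = real n * (\<Sum>t<N. real (cc f t)) + real N"
      using sum_cnt[OF S_mem[OF f]] by (simp add: sum.distrib flip: of_nat_sum)
  qed
  also have "\<dots> = real n * (\<Sum>f\<in>S n N. \<Sum>t<N. real (cc f t)) + real n ^ N * real N"
    by (simp add: sum.distrib sum_distrib_left card_S)
  finally have e: "(\<Sum>f\<in>S n (Suc N). \<Sum>t<Suc N. real (cc f t)) = 
     real n * (\<Sum>f\<in>S n N. \<Sum>t<N. real (cc f t)) + real n ^ N * real N" .
  define A where "A = (\<Sum>f\<in>S n N. \<Sum>t<N. real (cc f t))"
  have IH: "2 * real n * A = real n ^ N * real N * (real N - 1)" using Suc unfolding A_def .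
  have "2 * real n * (real n * A + real n ^ N * real N) = real n * (2 * real n * A) + 2 * real n * real n ^ N * real N"
    by (simp add: algebra_simps)
  also have "\<dots> = real n ^ Suc N * real (Suc N) * (real (Suc N) - 1)"
    unfolding IH by (simp add: algebra_simps)
  finally show ?case unfolding e A_def .
qed

lemma sq_sum_shift:
  fixes c :: "nat \<Rightarrow> real"
  shows "(\<Sum>x<n. (y + c x - m)^2) = real n * (y - m)^2 + 2 * (y - m) * (\<Sum>x<n. c x) + (\<Sum>x<n. (c x)^2)"
proof -
  have "(\<Sum>x<n. (y + c x - m)^2) = (\<Sum>x<n. (y - m)^2 + 2 * (y - m) * c x + (c x)^2)"
    by (intro sum.cong) (auto simp: power2_eq_square algebra_simps)
  also have "\<dots> = real n * (y - m)^2 + 2 * (y - m) * (\<Sum>x<n. c x) + (\<Sum>x<n. (c x)^2)"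
    by (simp add: sum.distrib sum_distrib_left)
  finally show ?thesis .
qed

lemma sum_V:
  assumes n: "n \<ge> 1"
  shows "(\<Sum>f\<in>S n N. ((\<Sum>t<N. real (cc f t)) - real N * (real N - 1) / (2 * real n))^2)
      \<le> real n ^ N * (real N)^2 / real n"
proof (induction N)
  case 0 then show ?case by simp
next
  case (Suc N)
  define X where "X f = (\<Sum>t<N. real (cc f t))" for f
  define \<mu> where "\<mu> = real N * (real N - 1) / (2 * real n)"
  have np: "real n > 0" using n by simp
  have mu: "real (Suc N) * (real (Suc N) - 1) / (2 * real n) = \<mu> + real N / real n"
    unfolding \<mu>_def using np by (simp add: field_simps)
  have "(\<Sum>f\<in>S n (Suc N). ((\<Sum>t<Suc N. real (cc f t)) - real (Suc N) * (real (Suc N) - 1) / (2 * real n))^2)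
     = (\<Sum>f\<in>S n N. \<Sum>x<n. (X f + real (cnt f N x) - (\<mu> + real N / real n))^2)"
    unfolding sum_S_Suc mu X_def by (simp add: cc_upd cc_upd_N)
  also have "\<dots> = (\<Sum>f\<in>S n N. real n * (X f - \<mu>)^2 + real N + 2 * X f - (real N)^2 / real n)"
  proof (intro sum.cong refl)
    fix f assume f: "f \<in> S n N"
    have s1: "(\<Sum>x<n. real (cnt f N x)) = real N"
      using sum_cnt[OF S_mem[OF f]] by (simp flip: of_nat_sum)
    have s2: "(\<Sum>x<n. (real (cnt f N x))^2) = real N + 2 * X f"
      using sum_cnt_sq[OF S_mem[OF f]] unfolding X_def .
    show "(\<Sum>x<n. (X f + real (cnt f N x) - (\<mu> + real N / real n))^2) = 
       real n * (X f - \<mu>)^2 + real N + 2 * X f - (real N)^2 / real n"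
      unfolding sq_sum_shift s1 s2 using np
      by (simp add: field_simps power2_eq_square)
  qed
  also have "\<dots> = real n * (\<Sum>f\<in>S n N. (X f - \<mu>)^2) + real n ^ N * (real N - (real N)^2 / real n)
      + 2 * (\<Sum>f\<in>S n N. X f)"
    by (simp add: sum.distrib sum_subtractf sum_distrib_left card_S algebra_simps)
  also have "2 * (\<Sum>f\<in>S n N. X f) = real n ^ N * real N * (real N - 1) / real n"
    using sum_X[of n N] np unfolding X_def by (simp add: field_simps)
  also have "real n * (\<Sum>f\<in>S n N. (X f - \<mu>)^2) + real n ^ N * (real N - (real N)^2 / real n)
      + real n ^ N * real N * (real N - 1) / real n \<le> real n * (real n ^ N * (real N)^2 / real n) + real n ^ N * real N"
  proof -
    have "real n * (\<Sum>f\<in>S n N. (X f - \<mu>)^2) \<le> real n * (real n ^ N * (real N)^2 / real n)"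
      using Suc np unfolding X_def \<mu>_def by (intro mult_left_mono) auto
    moreover have "real n ^ N * (real N - (real N)^2 / real n) + real n ^ N * real N * (real N - 1) / real n
       \<le> real n ^ N * real N"
      using np by (simp add: field_simps power2_eq_square)
    ultimately show ?thesis by linarith
  qed
  also have "\<dots> \<le> real n ^ Suc N * (real (Suc N))^2 / real n"
    using np by (simp add: field_simps power2_eq_square)
  finally show ?case .
qed

lemma sum_Q:
  assumes n: "n \<ge> 1"
  shows "(\<Sum>f\<in>S n N. \<Sum>t<N. (real (cc f t))^2)
      \<le> real n ^ N * ((real N)^2 / real n + (real N)^3 / (real n)^2)"
proof (induction N)
  case 0 then show ?case by simp
next
  case (Suc N)
  define X where "X f = (\<Sum>t<N. real (cc f t))" for f
  define Q where "Q f = (\<Sum>t<N. (real (cc f t))^2)" for f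
  have np: "real n > 0" using n by simp
  have "(\<Sum>f\<in>S n (Suc N). \<Sum>t<Suc N. (real (cc f t))^2)
     = (\<Sum>f\<in>S n N. \<Sum>x<n. Q f + (real (cnt f N x))^2)"
    unfolding sum_S_Suc Q_def by (simp add: cc_upd cc_upd_N)
  also have "\<dots> = (\<Sum>f\<in>S n N. real n * Q f + real N + 2 * X f)"
  proof (intro sum.cong refl)
    fix f assume f: "f \<in> S n N"
    show "(\<Sum>x<n. Q f + (real (cnt f N x))^2) = real n * Q f + real N + 2 * X f"
      using sum_cnt_sq[OF S_mem[OF f]] unfolding X_def by (simp add: sum.distrib)
  qed
  also have "\<dots> = real n * (\<Sum>f\<in>S n N. Q f) + real n ^ N * real N + 2 * (\<Sum>f\<in>S n N. X f)"
    by (simp add: sum.distrib sum_distrib_left card_S algebra_simps)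
  also have "2 * (\<Sum>f\<in>S n N. X f) = real n ^ N * real N * (real N - 1) / real n"
    using sum_X[of n N] np unfolding X_def by (simp add: field_simps)
  also have "real n * (\<Sum>f\<in>S n N. Q f) + real n ^ N * real N + real n ^ N * real N * (real N - 1) / real n
     \<le> real n * (real n ^ N * ((real N)^2 / real n + (real N)^3 / (real n)^2)) + real n ^ N * real N + real n ^ N * real N * (real N - 1) / real n"
    using Suc np unfolding Q_def by (intro add_right_mono mult_left_mono) auto
  also have "\<dots> \<le> real n ^ Suc N * ((real (Suc N))^2 / real n + (real (Suc N))^3 / (real n)^2)"
  proof -
    have a: "real n ^ N > 0" using np by simp
    have "real n * ((real N)^2 / real n + (real N)^3 / (real n)^2) + real N + real N * (real N - 1) / real n
       \<le> real n * ((real (Suc N))^2 / real n + (real (Suc N))^3 / (real n)^2)"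
    proof -
      have "real n * ((real N)^2 / real n + (real N)^3 / (real n)^2) = (real N)^2 + (real N)^3 / real n"
        using np by (simp add: field_simps power2_eq_square power3_eq_cube)
      moreover have "real n * ((real (Suc N))^2 / real n + (real (Suc N))^3 / (real n)^2) = (real N + 1)^2 + (real N + 1)^3 / real n"
        using np by (simp add: field_simps power2_eq_square power3_eq_cube)
      moreover have "(real N)^3 / real n + real N * (real N - 1) / real n \<le> (real N + 1)^3 / real n"
      proof -
        have "(real N)^3 + real N * (real N - 1) \<le> (real N + 1)^3"
          by (simp add: power3_eq_cube algebra_simps)
        then have "((real N)^3 + real N * (real N - 1)) / real n \<le> (real N + 1)^3 / real n"
          using np by (intro divide_right_mono) auto
        then show ?thesis by (simp add: add_divide_distrib)
      qed
      ultimately show ?thesis by (simp add: power2_eq_square algebra_simps)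
    qed
    from mult_left_mono[OF this, of "real n ^ N"] a
    have h: "real n ^ N * (real n * ((real N)^2 / real n + (real N)^3 / (real n)^2) + real N + real N * (real N - 1) / real n)
       \<le> real n ^ N * (real n * ((real (Suc N))^2 / real n + (real (Suc N))^3 / (real n)^2))" by simp
    show ?thesis
      using h by (simp only: power_Suc distrib_left mult.assoc mult.left_commute[of "real n ^ N"] times_divide_eq_right)
  qed
  finally show ?case .
qed

lemma ln_lower: "x - x^2 \<le> ln (1 + x)"
  if x: "0 \<le> x" for x :: real
proof (cases "x \<le> 1")
  case True then show ?thesis using ln_one_plus_pos_lower_bound x by auto
next
  case False
  then have "x - x^2 \<le> 0" using x by (simp add: power2_eq_square)
  moreover have "0 \<le> ln (1 + x)" using False by simp
  ultimately show ?thesis by linarith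
qed

lemma gauss_real: "(\<Sum>t<N. real t) = real N * (real N - 1) / 2"
  by (induction N) (auto simp: field_simps)

lemma pointwise:
  fixes a :: real and c :: "nat \<Rightarrow> nat"
  assumes a: "a > 0" and n: "n \<ge> 1"
  shows "max (1 / real n ^ N - (\<Prod>t<N. a + real (c t)) / (\<Prod>t<N. a * real n + real t)) 0
     \<le> (1 / real n ^ N) * (\<bar>(\<Sum>t<N. real (c t)) - real N * (real N - 1) / (2 * real n)\<bar> / a
          + (\<Sum>t<N. (real (c t))^2) / a^2)"
proof -
  have np: "real n > 0" using n by simp
  define r where "r = (\<Prod>t<N. (a + real (c t)) / (a + real t / real n))"
  have pos: "(a + real t / real n) > 0" for t using a np by (simp add: add_pos_nonneg)
  have r_pos: "r > 0" unfolding r_def using a pos by (intro prod_pos) (auto intro!: divide_pos_pos add_pos_nonneg)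
  have D: "(\<Prod>t<N. a * real n + real t) = real n ^ N * (\<Prod>t<N. a + real t / real n)"
  proof -
    have "(\<Prod>t<N. a * real n + real t) = (\<Prod>t<N. real n * (a + real t / real n))"
      using np by (intro prod.cong) (auto simp: field_simps)
    then show ?thesis by (simp add: prod.distrib)
  qed
  have p_eq: "(\<Prod>t<N. a + real (c t)) / (\<Prod>t<N. a * real n + real t) = (1 / real n ^ N) * r"
  proof -
    have nz: "a + real t / real n \<noteq> 0" for t using pos[of t] by linarith
    show ?thesis unfolding D r_def by (simp add: prod_dividef nz)
  qed
  have "ln r = (\<Sum>t<N. ln ((a + real (c t)) / (a + real t / real n)))"
  proof -
    have "(a + real (c t)) / (a + real t / real n) > 0" for t
      using a pos[of t] by (intro divide_pos_pos) auto
    then have "(a + real (c t)) / (a + real t / real n) \<noteq> 0" for t by (metis less_irrefl)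
    then show ?thesis unfolding r_def by (intro ln_prod) auto
  qed
  also have "\<dots> = (\<Sum>t<N. ln (1 + real (c t) / a) - ln (1 + real t / (a * real n)))"
  proof (intro sum.cong refl)
    fix t
    have e1: "1 + real (c t) / a = (a + real (c t)) / a" using a by (simp add: field_simps)
    have e2: "1 + real t / (a * real n) = (a + real t / real n) / a" using a np by (simp add: field_simps)
    have "(a + real (c t)) / (a + real t / real n) = (1 + real (c t) / a) / (1 + real t / (a * real n))"
      unfolding e1 e2 using a by simp
    moreover have "1 + real (c t) / a > 0" "1 + real t / (a * real n) > 0" using a np
      by (auto intro!: add_pos_nonneg)
    ultimately show "ln ((a + real (c t)) / (a + real t / real n)) = ln (1 + real (c t) / a) - ln (1 + real t / (a * real n))"
      by (simp add: ln_div)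
  qed
  also have "\<dots> \<ge> (\<Sum>t<N. (real (c t) / a - (real (c t) / a)^2) - real t / (a * real n))"
    using a np by (intro sum_mono diff_mono ln_lower ln_add_one_self_le_self) auto
  finally have lnr: "ln r \<ge> (\<Sum>t<N. (real (c t) / a - (real (c t) / a)^2) - real t / (a * real n))" .
  have "(\<Sum>t<N. (real (c t) / a - (real (c t) / a)^2) - real t / (a * real n))
     = ((\<Sum>t<N. real (c t)) - (\<Sum>t<N. real t) / real n) / a - (\<Sum>t<N. (real (c t))^2) / a^2"
    using a np by (simp add: sum_subtractf sum_divide_distrib[symmetric] power_divide diff_divide_distrib
       flip: divide_divide_eq_left) (simp add: field_simps)
  also have "(\<Sum>t<N. real t) / real n = real N * (real N - 1) / (2 * real n)"
    by (simp add: gauss_real)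
  finally have lnr2: "ln r \<ge> ((\<Sum>t<N. real (c t)) - real N * (real N - 1) / (2 * real n)) / a - (\<Sum>t<N. (real (c t))^2) / a^2"
    using lnr by linarith
  have "1 - r \<le> - ln r" using ln_le_minus_one[OF r_pos] by linarith
  also have "\<dots> \<le> \<bar>(\<Sum>t<N. real (c t)) - real N * (real N - 1) / (2 * real n)\<bar> / a
          + (\<Sum>t<N. (real (c t))^2) / a^2"
  proof -
    have "- (((\<Sum>t<N. real (c t)) - real N * (real N - 1) / (2 * real n)) / a) \<le>
       \<bar>(\<Sum>t<N. real (c t)) - real N * (real N - 1) / (2 * real n)\<bar> / a"
      using a unfolding minus_divide_left by (intro divide_right_mono) auto
    then show ?thesis using lnr2 by linarith
  qed
  finally have k: "1 - r \<le> \<bar>(\<Sum>t<N. real (c t)) - real N * (real N - 1) / (2 * real n)\<bar> / a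
          + (\<Sum>t<N. (real (c t))^2) / a^2" .
  have nn: "0 \<le> \<bar>(\<Sum>t<N. real (c t)) - real N * (real N - 1) / (2 * real n)\<bar> / a
          + (\<Sum>t<N. (real (c t))^2) / a^2" using a by (auto intro!: add_nonneg_nonneg sum_nonneg divide_nonneg_nonneg)
  have u: "1 / real n ^ N > 0" using np by simp
  have "1 / real n ^ N - (1 / real n ^ N) * r = (1 / real n ^ N) * (1 - r)" by (simp add: right_diff_distrib)
  then show ?thesis unfolding p_eq using mult_left_mono[OF k, of "1 / real n ^ N"] u nn
    by (simp add: mult_nonneg_nonneg)
qed

lemma tv_S:
  fixes a :: real
  assumes a: "a > 0" and n: "n \<ge> 1"
  shows "(1/2) * (\<Sum>f\<in>S n N. \<bar>(\<Prod>t<N. a + real (cc f t)) / (\<Prod>t<N. a * real n + real t) - 1 / real n ^ N\<bar>)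
    \<le> (1 / real n ^ N) * (\<Sum>f\<in>S n N. \<bar>(\<Sum>t<N. real (cc f t)) - real N * (real N - 1) / (2 * real n)\<bar> / a
          + (\<Sum>t<N. (real (cc f t))^2) / a^2)"
proof -
  have np: "real n > 0" using n by simp
  define p where "p f = (\<Prod>t<N. a + real (cc f t)) / (\<Prod>t<N. a * real n + real t)" for f
  define u where "u = 1 / real n ^ N"
  have Dpos: "(\<Prod>t<N. a * real n + real t) > 0" using a np by (intro prod_pos) (auto intro!: add_pos_nonneg)
  have sp: "(\<Sum>f\<in>S n N. p f) = 1"
  proof -
    have "(\<Sum>f\<in>S n N. p f) = (\<Sum>f\<in>S n N. \<Prod>t<N. a + real (cc f t)) / (\<Prod>t<N. a * real n + real t)"
      unfolding p_def by (simp add: sum_divide_distrib)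
    also have "\<dots> = 1" unfolding norm_sum by (rule divide_self) (use Dpos in linarith)
    finally show ?thesis .
  qed
  have su: "(\<Sum>f\<in>S n N. u) = 1" unfolding u_def using np by (simp add: card_S)
  have "(\<Sum>f\<in>S n N. \<bar>p f - u\<bar>) = (\<Sum>f\<in>S n N. (p f - u) + 2 * max (u - p f) 0)"
    by (intro sum.cong) (auto simp: max_def abs_real_def)
  also have "\<dots> = 2 * (\<Sum>f\<in>S n N. max (u - p f) 0)"
    using sp su by (simp add: sum.distrib sum_subtractf sum_distrib_left)
  finally have e: "(1/2) * (\<Sum>f\<in>S n N. \<bar>p f - u\<bar>) = (\<Sum>f\<in>S n N. max (u - p f) 0)" by simp
  also have "\<dots> \<le> (\<Sum>f\<in>S n N. u * (\<bar>(\<Sum>t<N. real (cc f t)) - real N * (real N - 1) / (2 * real n)\<bar> / a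
          + (\<Sum>t<N. (real (cc f t))^2) / a^2))"
    unfolding p_def u_def by (intro sum_mono pointwise[OF a n])
  finally show ?thesis unfolding p_def u_def by (simp add: sum_distrib_left)
qed

lemma abs_le_sq: "(e::real) > 0 \<Longrightarrow> \<bar>y\<bar> \<le> (y::real)^2 / (2*e) + e / 2"
proof -
  assume e: "e > 0"
  have "0 \<le> (\<bar>y\<bar> - e)^2" by simp
  then have "2 * e * \<bar>y\<bar> \<le> y^2 + e^2" by (simp add: power2_eq_square algebra_simps)
  then show ?thesis using e by (simp add: field_simps power2_eq_square)
qed

lemma final_S:
  fixes a :: real
  assumes a: "a > 0" and n: "n \<ge> 1"
  shows "(1/2) * (\<Sum>f\<in>S n (k*n). \<bar>(\<Prod>t<k*n. a + real (cc f t)) / (\<Prod>t<k*n. a * real n + real t) - 1 / real n ^ (k*n)\<bar>)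
    \<le> (real k + 1) * sqrt (real n) / a + (real k^2 + real k^3) * real n / a^2"
proof -
  define N where "N = k * n"
  have np: "real n > 0" using n by simp
  have uN: "real n ^ N > 0" using np by simp
  define sg where "sg = (real k + 1) * sqrt (real n)"
  have sg: "sg > 0" unfolding sg_def using np by simp
  define X where "X f = (\<Sum>t<N. real (cc f t))" for f
  define \<mu> where "\<mu> = real N * (real N - 1) / (2 * real n)"
  define Q where "Q f = (\<Sum>t<N. (real (cc f t))^2)" for f
  have "(\<Sum>f\<in>S n N. \<bar>X f - \<mu>\<bar>) \<le> (\<Sum>f\<in>S n N. (X f - \<mu>)^2 / (2 * sg) + sg / 2)"
    by (intro sum_mono abs_le_sq sg)
  also have "\<dots> = (\<Sum>f\<in>S n N. (X f - \<mu>)^2) / (2 * sg) + real n ^ N * sg / 2"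
    by (simp add: sum.distrib sum_divide_distrib card_S)
  also have "\<dots> \<le> real n ^ N * (real N)^2 / real n / (2 * sg) + real n ^ N * sg / 2"
    using sum_V[OF n, of N] sg unfolding X_def \<mu>_def by (intro add_right_mono divide_right_mono) auto
  finally have A: "(\<Sum>f\<in>S n N. \<bar>X f - \<mu>\<bar>) / a \<le> real n ^ N * ((real N)^2 / real n / (2 * sg) + sg / 2) / a"
    using a by (intro divide_right_mono) (auto simp: algebra_simps)
  have B: "(\<Sum>f\<in>S n N. Q f) / a^2 \<le> real n ^ N * ((real N)^2 / real n + (real N)^3 / (real n)^2) / a^2"
    using sum_Q[OF n, of N] a unfolding Q_def by (intro divide_right_mono) auto
  have "(1/2) * (\<Sum>f\<in>S n N. \<bar>(\<Prod>t<N. a + real (cc f t)) / (\<Prod>t<N. a * real n + real t) - 1 / real n ^ N\<bar>)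
    \<le> (1 / real n ^ N) * (\<Sum>f\<in>S n N. \<bar>X f - \<mu>\<bar> / a + Q f / a^2)"
    using tv_S[OF a n, of N] unfolding X_def \<mu>_def Q_def .
  also have "\<dots> = (1 / real n ^ N) * ((\<Sum>f\<in>S n N. \<bar>X f - \<mu>\<bar>) / a + (\<Sum>f\<in>S n N. Q f) / a^2)"
    by (simp add: sum.distrib sum_divide_distrib)
  also have "\<dots> \<le> (1 / real n ^ N) * (real n ^ N * ((real N)^2 / real n / (2 * sg) + sg / 2) / a
      + real n ^ N * ((real N)^2 / real n + (real N)^3 / (real n)^2) / a^2)"
    using A B uN by (intro mult_left_mono add_mono) auto
  also have "\<dots> = ((real N)^2 / real n / (2 * sg) + sg / 2) / a + ((real N)^2 / real n + (real N)^3 / (real n)^2) / a^2"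
    using uN by (simp add: field_simps)
  also have "(real N)^2 / real n / (2 * sg) + sg / 2 \<le> (real k + 1) * sqrt (real n)"
  proof -
    have sq: "sqrt (real n) * sqrt (real n) = real n" using np by simp
    have "(real N)^2 / real n / (2 * sg) = (real k)^2 * sqrt (real n) / (2 * (real k + 1))"
    proof -
      define r where "r = sqrt (real n)"
      have r: "r > 0" unfolding r_def using np by simp
      have "(real N)^2 / real n = (real k)^2 * (r * r)"
        unfolding N_def r_def using np sq by (simp add: power2_eq_square)
      then have "(real N)^2 / real n / (2 * sg) = (real k)^2 * (r * r) / (2 * ((real k + 1) * r))"
        unfolding sg_def r_def by simp
      also have "\<dots> = (real k)^2 * r / (2 * (real k + 1))"
      proof -
        have "(real k)^2 * (r * r) / (2 * ((real k + 1) * r)) = ((real k)^2 * r * r) / ((2 * (real k + 1)) * r)"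
          by (simp add: mult.assoc mult.commute mult.left_commute)
        also have "\<dots> = (real k)^2 * r / (2 * (real k + 1))"
          using r by (intro mult_divide_mult_cancel_right) simp
        finally show ?thesis .
      qed
      finally show ?thesis unfolding r_def .
    qed
    also have "\<dots> \<le> (real k + 1) * sqrt (real n) / 2"
    proof -
      have "(real k)^2 \<le> (real k + 1) * (real k + 1)" by (simp add: power2_eq_square algebra_simps)
      then have "(real k)^2 * sqrt (real n) \<le> (real k + 1) * (real k + 1) * sqrt (real n)"
        by (intro mult_right_mono) auto
      then show ?thesis by (simp add: field_simps)
    qed
    finally have h: "(real N)^2 / real n / (2 * sg) \<le> (real k + 1) * sqrt (real n) / 2" .
    show ?thesis using h sg_def by linarith
  qed
  also have "(real N)^2 / real n + (real N)^3 / (real n)^2 = (real k^2 + real k^3) * real n"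
    unfolding N_def using np by (simp add: field_simps power2_eq_square power3_eq_cube)
  finally show ?thesis using a unfolding N_def by (simp add: divide_right_mono)
qed

definition gmap :: "nat \<Rightarrow> nat \<Rightarrow> (nat \<Rightarrow> nat \<Rightarrow> nat) \<Rightarrow> nat \<Rightarrow> nat" where
  "gmap k n M = (\<lambda>t. if t < k * n then M (t div k) (t mod k) else undefined)"

definition hmap :: "nat \<Rightarrow> nat \<Rightarrow> (nat \<Rightarrow> nat) \<Rightarrow> nat \<Rightarrow> nat \<Rightarrow> nat" where
  "hmap k n f = (\<lambda>i. if i < n then (\<lambda>l. if l < k then f (i * k + l) else undefined) else undefined)"

lemma idx_lt: "(i::nat) < n \<Longrightarrow> l < k \<Longrightarrow> i * k + l < k * n"
proof -
  assume "i < n" "l < k"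
  then have "i * k + l < i * k + k" by simp
  also have "\<dots> = (i + 1) * k" by simp
  also have "\<dots> \<le> n * k" using \<open>i < n\<close> by (intro mult_right_mono) auto
  finally show ?thesis by (simp add: mult.commute)
qed

lemma div_lt: "(t::nat) < k * n \<Longrightarrow> t div k < n"
proof -
  assume "t < k * n"
  then show ?thesis using less_mult_imp_div_less[of t n k] by (simp add: mult.commute)
qed

lemma mod_lt: "(t::nat) < k * n \<Longrightarrow> t mod k < k"
proof -
  assume "t < k * n"
  then have "k > 0" by (cases k) auto
  then show ?thesis by simp
qed

lemma bij_g: "bij_betw (gmap k n) (kout_maps n k) (S n (k*n))"
proof (rule bij_betw_byWitness[where f' = "hmap k n"])
  show "\<forall>M\<in>kout_maps n k. hmap k n (gmap k n M) = M"
  proof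
    fix M assume M: "M \<in> kout_maps n k"
    show "hmap k n (gmap k n M) = M"
    proof (intro ext)
      fix i l
      show "hmap k n (gmap k n M) i l = M i l"
        using M idx_lt[of i n l k]
        by (auto simp: hmap_def gmap_def kout_maps_def PiE_iff extensional_def)
    qed
  qed
  show "\<forall>f\<in>S n (k*n). gmap k n (hmap k n f) = f"
  proof
    fix f assume f: "f \<in> S n (k*n)"
    show "gmap k n (hmap k n f) = f"
    proof (intro ext)
      fix t
      show "gmap k n (hmap k n f) t = f t"
        using f div_lt[of t k n] mod_lt[of t k n]
        by (auto simp: hmap_def gmap_def PiE_iff extensional_def)
    qed
  qed
  show "gmap k n ` kout_maps n k \<subseteq> S n (k*n)"
    using div_lt mod_lt by (fastforce simp: gmap_def kout_maps_def PiE_iff extensional_def)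
  show "hmap k n ` S n (k*n) \<subseteq> kout_maps n k"
    using idx_lt by (fastforce simp: hmap_def kout_maps_def PiE_iff extensional_def)
qed

lemma indeg_cnt: "indeg n k M j = cnt (gmap k n M) (k * n) j"
proof -
  have "bij_betw (\<lambda>(i, l). i * k + l) {(i, l). i < n \<and> l < k \<and> M i l = j} {s. s < k * n \<and> gmap k n M s = j}"
  proof (rule bij_betw_byWitness[where f' = "\<lambda>s. (s div k, s mod k)"])
    show "\<forall>p\<in>{(i, l). i < n \<and> l < k \<and> M i l = j}. (\<lambda>s. (s div k, s mod k)) ((\<lambda>(i, l). i * k + l) p) = p"
      by auto
    show "\<forall>s\<in>{s. s < k * n \<and> gmap k n M s = j}. (\<lambda>(i, l). i * k + l) ((\<lambda>s. (s div k, s mod k)) s) = s"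
      by (auto simp: mult.commute)
    show "(\<lambda>(i, l). i * k + l) ` {(i, l). i < n \<and> l < k \<and> M i l = j} \<subseteq> {s. s < k * n \<and> gmap k n M s = j}"
      using idx_lt by (auto simp: gmap_def)
    show "(\<lambda>s. (s div k, s mod k)) ` {s. s < k * n \<and> gmap k n M s = j} \<subseteq> {(i, l). i < n \<and> l < k \<and> M i l = j}"
      using div_lt mod_lt by (auto simp: gmap_def)
  qed
  then show ?thesis unfolding indeg_def cnt_def by (rule bij_betw_same_card)
qed

lemma poch_cnt: "\<forall>s<N. f s < n \<Longrightarrow>
   (\<Prod>j<n. pochhammer a (cnt f N j)) = (\<Prod>t<N. (a + real (cc f t)))"
proof (induction N)
  case 0 then show ?case by (simp add: cnt_def)
next
  case (Suc N)
  have "(\<Prod>j<n. pochhammer a (cnt f (Suc N) j)) =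
     (\<Prod>j<n. pochhammer a (cnt f N j) * (if f N = j then a + real (cnt f N j) else 1))"
    by (intro prod.cong) (auto simp: cnt_Suc pochhammer_Suc)
  also have "\<dots> = (\<Prod>j<n. pochhammer a (cnt f N j)) * (a + real (cc f N))"
    using Suc.prems by (simp add: prod.distrib prod.delta cc_def)
  finally show ?case using Suc by simp
qed

lemma dTV_eq: "dTV n k a = (1/2) * (\<Sum>f\<in>S n (k*n). \<bar>(\<Prod>t<k*n. a + real (cc f t)) / (\<Prod>t<k*n. a * real n + real t) - 1 / real n ^ (k*n)\<bar>)"
proof -
  have "(\<Sum>M\<in>kout_maps n k. \<bar>prob_alpha n k a M - prob_unif n k M\<bar>)
     = (\<Sum>M\<in>kout_maps n k. (\<lambda>f. \<bar>(\<Prod>t<k*n. a + real (cc f t)) / (\<Prod>t<k*n. a * real n + real t) - 1 / real n ^ (k*n)\<bar>) (gmap k n M))"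
  proof (intro sum.cong refl)
    fix M assume M: "M \<in> kout_maps n k"
    have fm: "\<forall>s<k*n. gmap k n M s < n" using bij_betw_apply[OF bij_g M] by (auto simp: PiE_iff)
    have "(\<Prod>j<n. pochhammer a (indeg n k M j)) = (\<Prod>t<k*n. a + real (cc (gmap k n M) t))"
      unfolding indeg_cnt using poch_cnt[OF fm] .
    moreover have "pochhammer (a * real n) (k * n) = (\<Prod>t<k*n. a * real n + real t)"
      by (simp add: pochhammer_prod atLeast0LessThan)
    ultimately show "\<bar>prob_alpha n k a M - prob_unif n k M\<bar> = (\<lambda>f. \<bar>(\<Prod>t<k*n. a + real (cc f t)) / (\<Prod>t<k*n. a * real n + real t) - 1 / real n ^ (k*n)\<bar>) (gmap k n M)"
      by (simp add: prob_alpha_def prob_unif_def)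
  qed
  also have "\<dots> = (\<Sum>f\<in>S n (k*n). \<bar>(\<Prod>t<k*n. a + real (cc f t)) / (\<Prod>t<k*n. a * real n + real t) - 1 / real n ^ (k*n)\<bar>)"
    by (rule sum.reindex_bij_betw[OF bij_g])
  finally show ?thesis unfolding dTV_def by simp
qed


lemma dTV_bound:
  assumes a: "a > 0" and n: "n \<ge> 1"
  shows "dTV n k a \<le> (real k + 1) / (a / sqrt (real n)) + (real k^2 + real k^3) / (a / sqrt (real n))^2"
proof -
  have np: "real n > 0" using n by simp
  have sq: "(sqrt (real n))^2 = real n" using np by simp
  have "dTV n k a \<le> (real k + 1) * sqrt (real n) / a + (real k^2 + real k^3) * real n / a^2"
    unfolding dTV_eq using final_S[OF a n] .
  also have "\<dots> = (real k + 1) / (a / sqrt (real n)) + (real k^2 + real k^3) / (a / sqrt (real n))^2"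
    by (simp add: power_divide sq)
  finally show ?thesis .
qed

lemma dTV_nonneg: "dTV n k a \<ge> 0"
  unfolding dTV_def by (auto intro!: sum_nonneg)

theorem theorem1:
  fixes k :: nat and \<alpha> :: "nat \<Rightarrow> real"
  assumes "\<forall>n. 0 < \<alpha> n"
    and "filterlim (\<lambda>n. \<alpha> n / sqrt (real n)) at_top sequentially"
  shows "(\<lambda>n. dTV n k (\<alpha> n)) \<longlonglongrightarrow> 0"
proof -
  define w where "w n = \<alpha> n / sqrt (real n)" for n
  have w: "filterlim w at_top sequentially" using assms(2) unfolding w_def .
  have iw: "(\<lambda>n. inverse (w n)) \<longlonglongrightarrow> 0" using tendsto_inverse_0_at_top[OF w] .
  have g: "(\<lambda>n. (real k + 1) * inverse (w n) + (real k^2 + real k^3) * (inverse (w n))^2) \<longlonglongrightarrow> 0"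
  proof -
    have i2: "(\<lambda>n. (inverse (w n))^2) \<longlonglongrightarrow> 0" using tendsto_power[OF iw, of 2] by simp
    show ?thesis
      using tendsto_add[OF tendsto_mult_right_zero[OF iw] tendsto_mult_right_zero[OF i2]] by simp
  qed
  have Fe: "(\<lambda>n. (real k + 1) / w n + (real k^2 + real k^3) / (w n)^2) = 
      (\<lambda>n. (real k + 1) * inverse (w n) + (real k^2 + real k^3) * (inverse (w n))^2)"
    by (simp add: fun_eq_iff divide_inverse power_inverse)
  have g2: "(\<lambda>n. (real k + 1) / w n + (real k^2 + real k^3) / (w n)^2) \<longlonglongrightarrow> 0"
    unfolding Fe by (rule g)
  show ?thesis
  proof (rule tendsto_sandwich[OF _ _ tendsto_const g2])
    show "\<forall>\<^sub>F n in sequentially. 0 \<le> dTV n k (\<alpha> n)" by (simp add: dTV_nonneg)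
    show "\<forall>\<^sub>F n in sequentially. dTV n k (\<alpha> n) \<le> (real k + 1) / w n + (real k^2 + real k^3) / (w n)^2"
      using eventually_ge_at_top[of 1]
    proof eventually_elim
      case (elim n)
      show ?case using dTV_bound[OF spec[OF assms(1), of n] elim, of k]
        unfolding w_def .
    qed
  qed
qed

end
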